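(* There is a function $C_3(t,\epsilon)$ such that the following holds for every positive integer $t$ and every $\epsilon\in(0,1)$: let $G$ be a bipartite graph with $\delta(G)\geq C_3(t,\epsilon)$ which is induced $S_{t,t}$-free. Then for every path $x_1x_2x_3x_4$ of length $3$ in $G$ we have $|S_{N(x_1)}^{N(x_4)}(\epsilon)|\leq C_3(t,\epsilon)$.
   Context: For positive integers $a,b$, the biclaw $S_{a,b}$ is the graph with vertex set $\{x,x_1,\dots,x_a,y,y_1,\dots,y_b\}$ and edges $xy$, $xy_1,\dots,xy_b$, $yx_1,\dots,yx_a$. Induced $S_{t,t}$-free means no induced subgraph isomorphic to $S_{t,t}$. $N(v)$ is the neighbourhood of $v$, $\delta(G)$ the minimum degree. For vertex sets $X,Y$ and $\epsilon\in(0,1)$, $S_X^Y(\epsilon)=\{x\in X : |N(x)\cap Y|\leq (1-\epsilon)|Y|\}$. *)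

theory Defs
  imports Complex_Main
begin

definition graph :: "nat set \<Rightarrow> (nat \<Rightarrow> nat \<Rightarrow> bool) \<Rightarrow> bool" where
  "graph V E \<longleftrightarrow> finite V \<and> (\<forall>u v. E u v \<longrightarrow> u \<in> V \<and> v \<in> V)
     \<and> (\<forall>u v. E u v \<longrightarrow> E v u) \<and> (\<forall>u. \<not> E u u)"

definition nbhd :: "nat set \<Rightarrow> (nat \<Rightarrow> nat \<Rightarrow> bool) \<Rightarrow> nat \<Rightarrow> nat set" where
  "nbhd V E v = {u \<in> V. E v u}"

definition bipartite :: "nat set \<Rightarrow> (nat \<Rightarrow> nat \<Rightarrow> bool) \<Rightarrow> bool" where
  "bipartite V E \<longleftrightarrow> (\<exists>A B. A \<union> B = V \<and> A \<inter> B = {} \<and>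
     (\<forall>u v. E u v \<longrightarrow> (u \<in> A \<longleftrightarrow> v \<in> B)))"

definition min_degree_ge :: "nat set \<Rightarrow> (nat \<Rightarrow> nat \<Rightarrow> bool) \<Rightarrow> real \<Rightarrow> bool" where
  "min_degree_ge V E d \<longleftrightarrow> (\<forall>v \<in> V. real (card (nbhd V E v)) \<ge> d)"

datatype bvert = BX | BY | BXi nat | BYi nat

definition biclaw_verts :: "nat \<Rightarrow> nat \<Rightarrow> bvert set" where
  "biclaw_verts a b = {BX, BY} \<union> BXi ` {1..a} \<union> BYi ` {1..b}"

fun biclaw_edge :: "bvert \<Rightarrow> bvert \<Rightarrow> bool" where
  "biclaw_edge BX BY = True"
| "biclaw_edge BY BX = True"
| "biclaw_edge BX (BYi _) = True"
| "biclaw_edge (BYi _) BX = True"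
| "biclaw_edge BY (BXi _) = True"
| "biclaw_edge (BXi _) BY = True"
| "biclaw_edge _ _ = False"

definition has_induced_biclaw :: "nat set \<Rightarrow> (nat \<Rightarrow> nat \<Rightarrow> bool) \<Rightarrow> nat \<Rightarrow> nat \<Rightarrow> bool" where
  "has_induced_biclaw V E a b \<longleftrightarrow> (\<exists>f. inj_on f (biclaw_verts a b) \<and> f ` biclaw_verts a b \<subseteq> V \<and>
     (\<forall>u \<in> biclaw_verts a b. \<forall>v \<in> biclaw_verts a b. E (f u) (f v) \<longleftrightarrow> biclaw_edge u v))"

definition S_set :: "nat set \<Rightarrow> (nat \<Rightarrow> nat \<Rightarrow> bool) \<Rightarrow> nat set \<Rightarrow> nat set \<Rightarrow> real \<Rightarrow> nat set" where
  "S_set V E X Y eps = {x \<in> X. real (card (nbhd V E x \<inter> Y)) \<le> (1 - eps) * real (card Y)}"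

end

theory Submission imports Defs begin

lemma avg_exists:
  fixes f :: "nat \<Rightarrow> real"
  assumes "finite A" "A \<noteq> {}" "sum f A \<ge> B"
  shows "\<exists>a\<in>A. f a \<ge> B / card A"
proof (rule ccontr)
  assume "\<not> ?thesis"
  hence "\<forall>a\<in>A. f a < B / card A" by auto
  hence "sum f A < sum (\<lambda>_. B / card A) A"
    using assms by (intro sum_strict_mono) auto
  also have "\<dots> = B" using assms by simp
  finally show False using assms by simp
qed

lemma card_filter_sum:
  assumes "finite A"
  shows "real (card {u\<in>A. P u}) = (\<Sum>u\<in>A. if P u then 1 else 0)"
  using assms by (simp add: sum.If_cases Int_def)

lemma double_count:
  assumes "finite A" "finite B"
  shows "(\<Sum>m\<in>B. real (card {u\<in>A. R u m})) = (\<Sum>u\<in>A. real (card {m\<in>B. R u m}))"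
proof -
  have "(\<Sum>m\<in>B. real (card {u\<in>A. R u m})) = (\<Sum>m\<in>B. \<Sum>u\<in>A. if R u m then 1 else 0)"
    using assms by (simp add: card_filter_sum)
  also have "\<dots> = (\<Sum>u\<in>A. \<Sum>m\<in>B. if R u m then 1 else 0)" by (rule sum.swap)
  also have "\<dots> = (\<Sum>u\<in>A. real (card {m\<in>B. R u m}))"
    using assms by (simp add: card_filter_sum)
  finally show ?thesis .
qed

lemma core:
  fixes X Y :: "nat set" and E :: "nat \<Rightarrow> nat \<Rightarrow> bool" and c :: real and t :: nat
  assumes fX: "finite X" and fY: "finite Y" and c0: "0 < c" and c1: "c \<le> 1"
   and bad: "\<forall>u\<in>X. real (card {m\<in>Y. \<not> E u m}) \<ge> c * card Y"
   and cY: "c * card Y \<ge> 2*t"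
   and cX: "(c/2)^t * card X \<ge> t"
  shows "\<exists>Ts Tm. Ts \<subseteq> X \<and> Tm \<subseteq> Y \<and> card Ts = t \<and> card Tm = t \<and> (\<forall>u\<in>Ts. \<forall>m\<in>Tm. \<not> E u m)"
proof -
  have main: "k \<le> t \<Longrightarrow> \<exists>Tm X'. Tm \<subseteq> Y \<and> card Tm = k \<and> X' \<subseteq> X \<and> (c/2)^k * card X \<le> card X'
      \<and> (\<forall>u\<in>X'. \<forall>m\<in>Tm. \<not> E u m)" for k
  proof (induction k)
    case 0
    show ?case by (rule exI[of _ "{}"], rule exI[of _ X]) simp
  next
    case (Suc k)
    then obtain Tm X' where Tm: "Tm \<subseteq> Y" "card Tm = k" and X': "X' \<subseteq> X"
      "(c/2)^k * card X \<le> card X'" and ne: "\<forall>u\<in>X'. \<forall>m\<in>Tm. \<not> E u m" by auto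
    define Y' where "Y' = Y - Tm"
    have fY': "finite Y'" using fY Y'_def by simp
    have fX': "finite X'" using X' fX finite_subset by blast
    have fTm: "finite Tm" using Tm fY finite_subset by blast
    have cardY': "card Y' = card Y - k" using Tm fTm by (simp add: Y'_def card_Diff_subset)
    have "real (card Y) \<ge> c * card Y" using c1 c0 by (intro mult_left_le_one_le) auto
    hence kY: "real k < card Y" using cY Suc.prems by linarith
    hence Y'ne: "Y' \<noteq> {}" using cardY' by auto
    have each: "real (card {m\<in>Y'. \<not> E u m}) \<ge> c * card Y / 2" if u: "u \<in> X'" for u
    proof -
      have "{m\<in>Y. \<not> E u m} \<subseteq> {m\<in>Y'. \<not> E u m} \<union> Tm" using Y'_def by auto
      hence "card {m\<in>Y. \<not> E u m} \<le> card ({m\<in>Y'. \<not> E u m} \<union> Tm)"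
        using fY' fTm by (intro card_mono) auto
      also have "\<dots> \<le> card {m\<in>Y'. \<not> E u m} + card Tm" by (rule card_Un_le)
      finally have "real (card {m\<in>Y. \<not> E u m}) \<le> card {m\<in>Y'. \<not> E u m} + k" using Tm by simp
      moreover have "real (card {m\<in>Y. \<not> E u m}) \<ge> c * card Y" using bad u X' by auto
      moreover have "real k \<le> c * card Y / 2" using cY Suc.prems by simp
      ultimately show ?thesis by linarith
    qed
    have "(\<Sum>m\<in>Y'. real (card {u\<in>X'. \<not> E u m})) = (\<Sum>u\<in>X'. real (card {m\<in>Y'. \<not> E u m}))"
      by (rule double_count[OF fX' fY'])
    also have "\<dots> \<ge> (\<Sum>u\<in>X'. c * card Y / 2)" using each by (intro sum_mono) auto
    finally have "(\<Sum>m\<in>Y'. real (card {u\<in>X'. \<not> E u m})) \<ge> card X' * (c * card Y / 2)" by simp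
    then obtain m where m: "m \<in> Y'" and mb: "real (card {u\<in>X'. \<not> E u m}) \<ge> card X' * (c * card Y / 2) / card Y'"
      using avg_exists[OF fY' Y'ne] by blast
    have "card Y' \<le> card Y" using cardY' by simp
    have Y'pos: "real (card Y') > 0" using Y'ne fY' by (simp add: card_gt_0_iff)
    have "card X' * (c * card Y / 2) / card Y' \<ge> card X' * (c * card Y' / 2) / card Y'"
      using \<open>card Y' \<le> card Y\<close> c0 Y'pos
      by (intro divide_right_mono mult_left_mono) auto
    also have "card X' * (c * card Y' / 2) / card Y' = (c/2) * card X'" using Y'pos by simp
    finally have mb2: "real (card {u\<in>X'. \<not> E u m}) \<ge> (c/2) * card X'" using mb by linarith
    show ?case
    proof (intro exI conjI)
      show "insert m Tm \<subseteq> Y" using m Tm Y'_def by auto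
      show "card (insert m Tm) = Suc k" using m Tm fTm Y'_def by auto
      show "{u\<in>X'. \<not> E u m} \<subseteq> X" using X' by auto
      have "(c/2)^Suc k * card X = (c/2) * ((c/2)^k * card X)" by simp
      also have "\<dots> \<le> (c/2) * card X'" using X' c0 by (intro mult_left_mono) auto
      finally show "(c/2)^Suc k * card X \<le> card {u\<in>X'. \<not> E u m}" using mb2 by linarith
      show "\<forall>u\<in>{u\<in>X'. \<not> E u m}. \<forall>m'\<in>insert m Tm. \<not> E u m'" using ne by auto
    qed
  qed
  obtain Tm X' where Tm: "Tm \<subseteq> Y" "card Tm = t" and X': "X' \<subseteq> X"
      "(c/2)^t * card X \<le> card X'" and ne: "\<forall>u\<in>X'. \<forall>m\<in>Tm. \<not> E u m" using main[of t] by auto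
  have "t \<le> card X'" using X' cX by linarith
  then obtain Ts where "Ts \<subseteq> X'" "card Ts = t" using obtain_subset_with_card_n[OF \<open>t \<le> card X'\<close>] by blast
  thus ?thesis using Tm X' ne by (intro exI[of _ Ts] exI[of _ Tm]) blast
qed



lemma make_biclaw:
  fixes s :: "nat \<Rightarrow> bool"
  assumes g: "graph V E" and sd: "\<forall>u v. E u v \<longrightarrow> s u \<noteq> s v"
   and xy: "E x y" and Ts: "Ts \<subseteq> nbhd V E x" and Tm: "Tm \<subseteq> nbhd V E y"
   and cTs: "card Ts = t" and cTm: "card Tm = t" and t0: "t > 0"
   and ne: "\<forall>u\<in>Ts. \<forall>m\<in>Tm. \<not> E u m"
  shows "has_induced_biclaw V E t t"
proof -
  have sym: "\<And>u v. E u v \<Longrightarrow> E v u" and irr: "\<And>u. \<not> E u u"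
    and inV: "\<And>u v. E u v \<Longrightarrow> u \<in> V \<and> v \<in> V" and fV: "finite V"
    using g unfolding graph_def by blast+
  have same: "\<And>a b. s a = s b \<Longrightarrow> \<not> E a b" using sd by blast
  have fTs: "finite Ts" using Ts fV unfolding nbhd_def by (auto intro: finite_subset)
  have fTm: "finite Tm" using Tm fV unfolding nbhd_def by (auto intro: finite_subset)
  have ETs: "\<And>u. u \<in> Ts \<Longrightarrow> E x u" using Ts unfolding nbhd_def by auto
  have ETm: "\<And>m. m \<in> Tm \<Longrightarrow> E y m" using Tm unfolding nbhd_def by auto
  have sxy: "s x \<noteq> s y" using sd xy by blast
  have sTs: "\<And>u. u \<in> Ts \<Longrightarrow> s u = s y" using ETs sd sxy by blast
  have sTm: "\<And>m. m \<in> Tm \<Longrightarrow> s m = s x" using ETm sd sxy by blast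
  obtain u0 where u0: "u0 \<in> Ts" using cTs t0 by fastforce
  obtain m0 where m0: "m0 \<in> Tm" using cTm t0 by fastforce
  have xTs: "x \<notin> Ts" using ETs irr by blast
  have yTm: "y \<notin> Tm" using ETm irr by blast
  have xTm: "x \<notin> Tm" using ne u0 ETs sym by blast
  have yTs: "y \<notin> Ts" using ne m0 ETm by blast
  have dis: "\<And>a. a \<in> Ts \<Longrightarrow> a \<notin> Tm" using sTs sTm sxy by fastforce
  have xneqy: "x \<noteq> y" using xy irr by blast
  obtain h1 where h1: "bij_betw h1 {1..t} Tm" using ex_bij_betw_nat_finite_1[OF fTm] cTm by blast
  obtain h2 where h2: "bij_betw h2 {1..t} Ts" using ex_bij_betw_nat_finite_1[OF fTs] cTs by blast
  have h1i: "\<And>i. i \<in> {1..t} \<Longrightarrow> h1 i \<in> Tm" using h1 bij_betwE by blast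
  have h2i: "\<And>i. i \<in> {1..t} \<Longrightarrow> h2 i \<in> Ts" using h2 bij_betwE by blast
  have h1inj: "\<And>i j. i \<in> {1..t} \<Longrightarrow> j \<in> {1..t} \<Longrightarrow> h1 i = h1 j \<Longrightarrow> i = j"
    using h1 unfolding bij_betw_def inj_on_def by blast
  have h2inj: "\<And>i j. i \<in> {1..t} \<Longrightarrow> j \<in> {1..t} \<Longrightarrow> h2 i = h2 j \<Longrightarrow> i = j"
    using h2 unfolding bij_betw_def inj_on_def by blast
  define f where "f = (\<lambda>v. case v of BX \<Rightarrow> x | BY \<Rightarrow> y | BXi i \<Rightarrow> h1 i | BYi j \<Rightarrow> h2 j)"
  have bv: "\<And>v. v \<in> biclaw_verts t t \<longleftrightarrow> v = BX \<or> v = BY \<or> (\<exists>i\<in>{1..t}. v = BXi i) \<or> (\<exists>i\<in>{1..t}. v = BYi i)"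
    unfolding biclaw_verts_def by auto
  have xV: "x \<in> V" and yV: "y \<in> V" using inV xy by auto
  have TsV: "Ts \<subseteq> V" and TmV: "Tm \<subseteq> V" using Ts Tm unfolding nbhd_def by auto
  show ?thesis unfolding has_induced_biclaw_def
  proof (intro exI conjI)
    show "inj_on f (biclaw_verts t t)"
    proof (rule inj_onI)
      fix u v assume uv: "u \<in> biclaw_verts t t" "v \<in> biclaw_verts t t" "f u = f v"
      have A1: "h1 i \<noteq> x" "h1 i \<noteq> y" "h2 i \<noteq> x" "h2 i \<noteq> y"
          "x \<noteq> h1 i" "y \<noteq> h1 i" "x \<noteq> h2 i" "y \<noteq> h2 i" if "i \<in> {1..t}" for i
        using h1i[OF that] h2i[OF that] xTs yTm xTm yTs by blast+
      have A2: "h1 i \<noteq> h2 j" "h2 j \<noteq> h1 i" if "i \<in> {1..t}" "j \<in> {1..t}" for i j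
        using dis[OF h2i[OF that(2)]] h1i[OF that(1)] by metis+
      have A3: "(h1 i = h1 j) = (i = j)" "(h2 i = h2 j) = (i = j)" if "i \<in> {1..t}" "j \<in> {1..t}" for i j
        using h1inj[OF that] h2inj[OF that] by blast+
      show "u = v" using uv
        unfolding bv f_def
        by (elim disjE bexE) (simp_all del: atLeastAtMost_iff add: A1 A2 A3 xneqy xneqy[symmetric])
    qed
    show "f ` biclaw_verts t t \<subseteq> V"
    proof (rule image_subsetI)
      fix v assume "v \<in> biclaw_verts t t"
      thus "f v \<in> V" using h1i h2i xV yV TsV TmV unfolding bv f_def by (elim disjE bexE) auto
    qed
    show "\<forall>u\<in>biclaw_verts t t. \<forall>v\<in>biclaw_verts t t. E (f u) (f v) = biclaw_edge u v"
    proof (intro ballI)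
      fix u v assume uv2: "u \<in> biclaw_verts t t" "v \<in> biclaw_verts t t"
      have e1: "E x y" "E y x" "\<not> E x x" "\<not> E y y" using xy sym irr by blast+
      have e2: "E x (h2 i)" "E (h2 i) x" "E y (h1 i)" "E (h1 i) y"
         "\<not> E x (h1 i)" "\<not> E (h1 i) x" "\<not> E y (h2 i)" "\<not> E (h2 i) y" if "i \<in> {1..t}" for i
      proof -
        have a: "h1 i \<in> Tm" "h2 i \<in> Ts" using h1i[OF that] h2i[OF that] .
        show "E x (h2 i)" "E (h2 i) x" "E y (h1 i)" "E (h1 i) y"
          using ETs[OF a(2)] ETm[OF a(1)] sym by blast+
        show "\<not> E x (h1 i)" "\<not> E (h1 i) x" using same sTm[OF a(1)] by metis+
        show "\<not> E y (h2 i)" "\<not> E (h2 i) y" using same sTs[OF a(2)] by metis+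
      qed
      have e3: "\<not> E (h1 i) (h1 j)" "\<not> E (h2 i) (h2 j)" "\<not> E (h1 i) (h2 j)" "\<not> E (h2 j) (h1 i)"
        if "i \<in> {1..t}" "j \<in> {1..t}" for i j
      proof -
        have a: "h1 i \<in> Tm" "h2 i \<in> Ts" "h1 j \<in> Tm" "h2 j \<in> Ts"
          using h1i[OF that(1)] h2i[OF that(1)] h1i[OF that(2)] h2i[OF that(2)] by auto
        show "\<not> E (h1 i) (h1 j)" using same sTm[OF a(1)] sTm[OF a(3)] by metis
        show "\<not> E (h2 i) (h2 j)" using same sTs[OF a(2)] sTs[OF a(4)] by metis
        show "\<not> E (h2 j) (h1 i)" using ne a(4) a(1) by blast
        thus "\<not> E (h1 i) (h2 j)" using sym by blast
      qed
      show "E (f u) (f v) = biclaw_edge u v" using uv2 unfolding bv f_def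
        by (elim disjE bexE) (simp_all del: atLeastAtMost_iff add: e1 e2 e3)
    qed
  qed
qed

lemma filter_partition:
  assumes "finite Y"
  shows "card {m\<in>Y. P m} + card {m\<in>Y. \<not> P m} = card Y"
proof -
  have "card ({m\<in>Y. P m} \<union> {m\<in>Y. \<not> P m}) = card {m\<in>Y. P m} + card {m\<in>Y. \<not> P m}"
    using assms by (intro card_Un_disjoint) auto
  moreover have "{m\<in>Y. P m} \<union> {m\<in>Y. \<not> P m} = Y" by auto
  ultimately show ?thesis by simp
qed

lemma nbhd_inter:
  assumes "graph V E"
  shows "nbhd V E u \<inter> nbhd V E b = {m\<in>nbhd V E b. E u m}"
proof -
  have "\<And>u v. E u v \<Longrightarrow> u \<in> V \<and> v \<in> V" using assms unfolding graph_def by blast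
  thus ?thesis unfolding nbhd_def by blast
qed

lemma finite_nbhd: "graph V E \<Longrightarrow> finite (nbhd V E v)"
proof -
  assume "graph V E"
  hence "finite V" unfolding graph_def by blast
  thus ?thesis unfolding nbhd_def by simp
qed

lemma side_fun:
  assumes "graph V E" "bipartite V E"
  shows "\<exists>s :: nat \<Rightarrow> bool. \<forall>u v. E u v \<longrightarrow> s u \<noteq> s v"
proof -
  obtain A B where AB: "A \<union> B = V" "A \<inter> B = {}" "\<forall>u v. E u v \<longrightarrow> (u \<in> A \<longleftrightarrow> v \<in> B)"
    using assms(2) unfolding bipartite_def by blast
  have "\<forall>u v. E u v \<longrightarrow> (u \<in> A) \<noteq> (v \<in> A)"
  proof (intro allI impI)
    fix u v assume e: "E u v"
    have "\<forall>u v. E u v \<longrightarrow> u \<in> V \<and> v \<in> V" using assms(1) unfolding graph_def by (elim conjE)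
    hence "v \<in> V" using e by blast
    hence "v \<in> A \<or> v \<in> B" using AB(1) by blast
    moreover have "u \<in> A \<longleftrightarrow> v \<in> B" using AB(3) e by blast
    ultimately show "(u \<in> A) \<noteq> (v \<in> A)" using AB(2) by blast
  qed
  thus ?thesis by (intro exI[of _ "\<lambda>v. v \<in> A"])
qed

lemma edge_lemma:
  fixes s :: "nat \<Rightarrow> bool" and \<delta> :: real
  assumes g: "graph V E" and sd: "\<forall>u v. E u v \<longrightarrow> s u \<noteq> s v"
    and nb: "\<not> has_induced_biclaw V E t t" and t0: "t > 0" and ab: "E a b"
    and d0: "0 < \<delta>" and d1: "\<delta> \<le> 1" and dN: "\<delta> * card (nbhd V E b) \<ge> 2 * t"
  shows "real (card {u\<in>nbhd V E a. real (card {m\<in>nbhd V E b. \<not> E u m}) \<ge> \<delta> * card (nbhd V E b)})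
           < t * (2/\<delta>)^t"
proof (rule ccontr)
  define X where "X = {u\<in>nbhd V E a. real (card {m\<in>nbhd V E b. \<not> E u m}) \<ge> \<delta> * card (nbhd V E b)}"
  assume "\<not> ?thesis"
  hence cX: "real (card X) \<ge> t * (2/\<delta>)^t" unfolding X_def by simp
  have fX: "finite X" using finite_nbhd[OF g] unfolding X_def by simp
  have "(\<delta>/2)^t * card X \<ge> (\<delta>/2)^t * (t * (2/\<delta>)^t)"
    using cX d0 by (intro mult_left_mono) auto
  also have "(\<delta>/2)^t * (t * (2/\<delta>)^t) = t * ((\<delta>/2) * (2/\<delta>))^t"
    by (simp add: power_mult_distrib[symmetric])
  also have "(\<delta>/2) * (2/\<delta>) = 1" using d0 by simp
  finally have cX2: "(\<delta>/2)^t * card X \<ge> t" by simp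
  obtain Ts Tm where T: "Ts \<subseteq> X" "Tm \<subseteq> nbhd V E b" "card Ts = t" "card Tm = t"
      "\<forall>u\<in>Ts. \<forall>m\<in>Tm. \<not> E u m"
  proof -
    have dN': "real (2 * t) \<le> \<delta> * card (nbhd V E b)" using dN by simp
    have bad: "\<forall>u\<in>X. \<delta> * real (card (nbhd V E b)) \<le> real (card {m \<in> nbhd V E b. \<not> E u m})"
      unfolding X_def by auto
    show ?thesis using core[OF fX finite_nbhd[OF g] d0 d1 bad dN' cX2] that by blast
  qed
  have "Ts \<subseteq> nbhd V E a" using T(1) unfolding X_def by auto
  hence "has_induced_biclaw V E t t"
    using make_biclaw[OF g sd ab _ T(2) T(3) T(4) t0 T(5)] by blast
  thus False using nb by blast
qed

definition dl :: "nat \<Rightarrow> real \<Rightarrow> real" where "dl t eps = eps / (2 * (real t + 1))"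
definition KK :: "nat \<Rightarrow> real \<Rightarrow> real" where "KK t eps = real t * (2 / dl t eps) ^ t"
definition C3f :: "nat \<Rightarrow> real \<Rightarrow> real" where
  "C3f t eps = 2 * KK t eps + real t * (4 / eps) ^ t + 8 * real t / eps + 2 * real t / dl t eps + 1"

lemma graphD:
  assumes "graph V E"
  shows "finite V" "E u v \<Longrightarrow> u \<in> V" "E u v \<Longrightarrow> v \<in> V" "E u v \<Longrightarrow> E v u" "\<not> E u u"
  using assms unfolding graph_def by blast+

theorem mainTheorem6:
  "\<exists>C3 :: nat \<Rightarrow> real \<Rightarrow> real. \<forall>t :: nat. \<forall>eps :: real. \<forall>V E.
     t > 0 \<longrightarrow> 0 < eps \<longrightarrow> eps < 1 \<longrightarrow>
     graph V E \<longrightarrow> bipartite V E \<longrightarrow> min_degree_ge V E (C3 t eps) \<longrightarrow>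
     \<not> has_induced_biclaw V E t t \<longrightarrow>
     (\<forall>x1 x2 x3 x4. distinct [x1, x2, x3, x4] \<and> E x1 x2 \<and> E x2 x3 \<and> E x3 x4 \<longrightarrow>
        real (card (S_set V E (nbhd V E x1) (nbhd V E x4) eps)) \<le> C3 t eps)"
proof (rule exI[of _ C3f], intro allI impI)
  fix t :: nat and eps :: real and V and E :: "nat \<Rightarrow> nat \<Rightarrow> bool" and x1 x2 x3 x4
  assume t0: "t > 0" and e0: "0 < eps" and e1: "eps < 1" and g: "graph V E" and bp: "bipartite V E"
    and md: "min_degree_ge V E (C3f t eps)" and nb: "\<not> has_induced_biclaw V E t t"
    and P: "distinct [x1, x2, x3, x4] \<and> E x1 x2 \<and> E x2 x3 \<and> E x3 x4"
  have e12: "E x1 x2" and e23: "E x2 x3" and e34: "E x3 x4" using P by auto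
  have sym: "\<And>u v. E u v \<Longrightarrow> E v u" by (rule graphD(4)[OF g])
  have inV1: "\<And>u v. E u v \<Longrightarrow> u \<in> V" by (rule graphD(2)[OF g])
  have inV2: "\<And>u v. E u v \<Longrightarrow> v \<in> V" by (rule graphD(3)[OF g])
  from side_fun[OF g bp] obtain s :: "nat \<Rightarrow> bool" where sd: "\<forall>u v. E u v \<longrightarrow> s u \<noteq> s v" ..
  define \<delta> where "\<delta> = dl t eps"
  define K where "K = KK t eps"
  define C where "C = C3f t eps"
  have tp: "real t + 1 > 0" by simp
  have d0: "0 < \<delta>" unfolding \<delta>_def dl_def using e0 by simp
  have dsum: "(real t + 1) * \<delta> = eps / 2" unfolding \<delta>_def dl_def using tp by (simp add: field_simps)
  have dh: "\<delta> \<le> eps / 2"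
  proof -
    have "\<delta> \<le> (real t + 1) * \<delta>" using d0 by (simp add: algebra_simps)
    thus ?thesis using dsum by simp
  qed
  have d1: "\<delta> \<le> 1" and dhalf: "\<delta> \<le> 1/2" using dh e1 by auto
  have K0: "K \<ge> 0" unfolding K_def KK_def using d0 by (simp add: \<delta>_def[symmetric])
  have P4: "real t * (4 / eps) ^ t \<ge> 0" using e0 by simp
  have q1: "8 * real t / eps \<ge> 0" and q2: "2 * real t / \<delta> \<ge> 0" using e0 d0 by auto
  have CK: "C > 2 * K" and C1: "C \<ge> 2 * real t / \<delta>" and C2: "C \<ge> 8 * real t / eps"
    and C3: "C \<ge> K + real t * (4 / eps) ^ t"
    unfolding C_def C3f_def using K0 P4 q1 q2 by (simp_all add: K_def[symmetric] \<delta>_def[symmetric])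
  have deg: "\<And>v. v \<in> V \<Longrightarrow> real (card (nbhd V E v)) \<ge> C"
    using md unfolding min_degree_ge_def C_def by blast
  have dNb: "\<delta> * card (nbhd V E v) \<ge> 2 * real t" if "v \<in> V" for v
  proof -
    have "\<delta> * card (nbhd V E v) \<ge> \<delta> * (2 * real t / \<delta>)"
      using deg[OF that] C1 d0 by (intro mult_left_mono) auto
    thus ?thesis using d0 by simp
  qed
  have fN: "\<And>v. finite (nbhd V E v)" using finite_nbhd[OF g] by blast
  define B12 where "B12 = {u\<in>nbhd V E x1. real (card {m\<in>nbhd V E x2. \<not> E u m}) \<ge> \<delta> * card (nbhd V E x2)}"
  define B32 where "B32 = {u\<in>nbhd V E x3. real (card {m\<in>nbhd V E x2. \<not> E u m}) \<ge> \<delta> * card (nbhd V E x2)}"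
  define B34 where "B34 = {u\<in>nbhd V E x3. real (card {m\<in>nbhd V E x4. \<not> E u m}) \<ge> \<delta> * card (nbhd V E x4)}"
  have x2V: "x2 \<in> V" and x4V: "x4 \<in> V" and x3V: "x3 \<in> V" using inV1 inV2 e12 e34 by blast+
  have cB12: "real (card B12) < K" unfolding B12_def K_def KK_def \<delta>_def[symmetric]
    by (rule edge_lemma[OF g sd nb t0 e12 d0 d1 dNb[OF x2V]])
  have cB32: "real (card B32) < K" unfolding B32_def K_def KK_def \<delta>_def[symmetric]
    by (rule edge_lemma[OF g sd nb t0 sym[OF e23] d0 d1 dNb[OF x2V]])
  have cB34: "real (card B34) < K" unfolding B34_def K_def KK_def \<delta>_def[symmetric]
    by (rule edge_lemma[OF g sd nb t0 e34 d0 d1 dNb[OF x4V]])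
  have "\<not> nbhd V E x3 \<subseteq> B32 \<union> B34"
  proof
    assume "nbhd V E x3 \<subseteq> B32 \<union> B34"
    hence "card (nbhd V E x3) \<le> card (B32 \<union> B34)"
      using fN unfolding B32_def B34_def by (intro card_mono) auto
    also have "\<dots> \<le> card B32 + card B34" by (rule card_Un_le)
    finally have "real (card (nbhd V E x3)) \<le> card B32 + card B34" by linarith
    thus False using cB32 cB34 CK deg[OF x3V] by linarith
  qed
  then obtain y0 where y0: "y0 \<in> nbhd V E x3" "y0 \<notin> B32" "y0 \<notin> B34" by blast
  have y0m2: "real (card {m\<in>nbhd V E x2. \<not> E y0 m}) < \<delta> * card (nbhd V E x2)"
    using y0 unfolding B32_def by auto
  have y0m4: "real (card {m\<in>nbhd V E x4. \<not> E y0 m}) < \<delta> * card (nbhd V E x4)"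
    using y0 unfolding B34_def by auto
  define S where "S = S_set V E (nbhd V E x1) (nbhd V E x4) eps"
  show "real (card (S_set V E (nbhd V E x1) (nbhd V E x4) eps)) \<le> C3f t eps"
    unfolding S_def[symmetric] C_def[symmetric]
  proof (rule ccontr)
    assume "\<not> real (card S) \<le> C"
    hence cS: "real (card S) > C" by simp
    have fS: "finite S" unfolding S_def S_set_def using fN by simp
    define X where "X = S - B12"
    have fX: "finite X" using fS X_def by simp
    have "S \<subseteq> X \<union> B12" unfolding X_def by auto
    hence "card S \<le> card (X \<union> B12)" using fX fN unfolding B12_def by (intro card_mono) auto
    also have "\<dots> \<le> card X + card B12" by (rule card_Un_le)
    finally have "real (card S) \<le> card X + card B12" by linarith
    hence cX: "real (card X) \<ge> real t * (4 / eps) ^ t" using cS cB12 C3 by linarith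
    define Y where "Y = {m\<in>nbhd V E x4. E y0 m}"
    have fY: "finite Y" unfolding Y_def using fN by simp
    have partY: "card Y + card {m\<in>nbhd V E x4. \<not> E y0 m} = card (nbhd V E x4)"
      unfolding Y_def by (rule filter_partition[OF fN])
    have YN4: "card Y \<le> card (nbhd V E x4)" using partY by linarith
    have cY: "real (card Y) \<ge> card (nbhd V E x4) / 2"
    proof -
      have "real (card Y) > card (nbhd V E x4) - \<delta> * card (nbhd V E x4)"
        using arg_cong[OF partY, of real] y0m4 by simp
      moreover have "\<delta> * card (nbhd V E x4) \<le> 1/2 * card (nbhd V E x4)"
        using dhalf by (intro mult_right_mono) auto
      ultimately show ?thesis by linarith
    qed
    have missY: "\<forall>u\<in>X. eps / 2 * real (card Y) \<le> real (card {m \<in> Y. \<not> E u m})"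
    proof
      fix u assume uX: "u \<in> X"
      hence uS: "u \<in> nbhd V E x1" "real (card (nbhd V E u \<inter> nbhd V E x4)) \<le> (1 - eps) * card (nbhd V E x4)"
        unfolding X_def S_def S_set_def by auto
      have "card {m\<in>nbhd V E x4. E u m} + card {m\<in>nbhd V E x4. \<not> E u m} = card (nbhd V E x4)"
        by (rule filter_partition[OF fN])
      moreover have "card {m\<in>nbhd V E x4. E u m} = card (nbhd V E u \<inter> nbhd V E x4)"
        using nbhd_inter[OF g] by simp
      ultimately have m4: "real (card {m\<in>nbhd V E x4. \<not> E u m}) \<ge> eps * card (nbhd V E x4)"
        using uS(2) by (simp add: algebra_simps)
      have "{m\<in>nbhd V E x4. \<not> E u m} \<subseteq> {m\<in>Y. \<not> E u m} \<union> {m\<in>nbhd V E x4. \<not> E y0 m}"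
        unfolding Y_def by auto
      hence "card {m\<in>nbhd V E x4. \<not> E u m} \<le> card ({m\<in>Y. \<not> E u m} \<union> {m\<in>nbhd V E x4. \<not> E y0 m})"
        using fN fY by (intro card_mono) auto
      also have "\<dots> \<le> card {m\<in>Y. \<not> E u m} + card {m\<in>nbhd V E x4. \<not> E y0 m}" by (rule card_Un_le)
      finally have "real (card {m\<in>nbhd V E x4. \<not> E u m}) \<le> card {m\<in>Y. \<not> E u m} + card {m\<in>nbhd V E x4. \<not> E y0 m}"
        by linarith
      hence "real (card {m\<in>Y. \<not> E u m}) \<ge> eps * card (nbhd V E x4) - \<delta> * card (nbhd V E x4)"
        using m4 y0m4 by linarith
      moreover have "\<delta> * card (nbhd V E x4) \<le> eps / 2 * card (nbhd V E x4)"
        using dh by (intro mult_right_mono) auto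
      moreover have "eps / 2 * card Y \<le> eps / 2 * card (nbhd V E x4)"
        using YN4 e0 by (intro mult_left_mono) auto
      ultimately show "eps / 2 * real (card Y) \<le> real (card {m \<in> Y. \<not> E u m})" by linarith
    qed
    have ce0: "0 < eps / 2" and ce1: "eps / 2 \<le> 1" using e0 e1 by auto
    have c2t: "real (2 * t) \<le> eps / 2 * card Y"
    proof -
      have "real (card Y) \<ge> C / 2" using cY deg[OF x4V] by linarith
      hence "real (card Y) \<ge> 4 * real t / eps" using C2 by linarith
      hence "eps / 2 * card Y \<ge> eps / 2 * (4 * real t / eps)" using e0 by (intro mult_left_mono) auto
      thus ?thesis using e0 by simp
    qed
    have cXt: "real t \<le> (eps / 2 / 2) ^ t * card X"
    proof -
      have "(eps / 2 / 2) ^ t * card X \<ge> (eps / 2 / 2) ^ t * (real t * (4 / eps) ^ t)"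
        using cX e0 by (intro mult_left_mono) auto
      also have "(eps / 2 / 2) ^ t * (real t * (4 / eps) ^ t) = real t * ((eps / 2 / 2) * (4 / eps)) ^ t"
        by (simp add: power_mult_distrib[symmetric])
      also have "(eps / 2 / 2) * (4 / eps) = 1" using e0 by simp
      finally show ?thesis by simp
    qed
    obtain Ts Tm where T: "Ts \<subseteq> X" "Tm \<subseteq> Y" "card Ts = t" "card Tm = t" "\<forall>u\<in>Ts. \<forall>m\<in>Tm. \<not> E u m"
      using core[OF fX fY ce0 ce1 missY c2t cXt] by blast
    have fTs: "finite Ts" using T(1) fX finite_subset by blast
    define U1 where "U1 = {w\<in>nbhd V E x2. \<not> E y0 w}"
    define U2 where "U2 = (\<Union>u\<in>Ts. {w\<in>nbhd V E x2. \<not> E u w})"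
    have Ts_good: "real (card {w\<in>nbhd V E x2. \<not> E u w}) < \<delta> * card (nbhd V E x2)" if "u \<in> Ts" for u
    proof -
      have "u \<in> nbhd V E x1" "u \<notin> B12" using that T(1) unfolding X_def S_def S_set_def by auto
      thus ?thesis unfolding B12_def by auto
    qed
    have "card U2 \<le> (\<Sum>u\<in>Ts. card {w\<in>nbhd V E x2. \<not> E u w})"
      unfolding U2_def using fTs by (rule card_UN_le)
    hence "real (card U2) \<le> real (\<Sum>u\<in>Ts. card {w\<in>nbhd V E x2. \<not> E u w})"
      by (rule of_nat_mono)
    also have "\<dots> = (\<Sum>u\<in>Ts. real (card {w\<in>nbhd V E x2. \<not> E u w}))"
      by (rule of_nat_sum)
    also have "\<dots> \<le> (\<Sum>u\<in>Ts. \<delta> * card (nbhd V E x2))"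
      using Ts_good by (intro sum_mono) (simp add: less_imp_le)
    also have "\<dots> = real t * (\<delta> * card (nbhd V E x2))" using T(3) by simp
    finally have cU2: "real (card U2) \<le> real t * (\<delta> * card (nbhd V E x2))" .
    have "card (U1 \<union> U2) \<le> card U1 + card U2" by (rule card_Un_le)
    hence "real (card (U1 \<union> U2)) < (real t + 1) * (\<delta> * card (nbhd V E x2))"
      using cU2 y0m2 unfolding U1_def by (simp add: algebra_simps)
    also have "\<dots> = eps / 2 * card (nbhd V E x2)" using dsum by simp
    also have "\<dots> \<le> card (nbhd V E x2)" using e0 e1 by (intro mult_left_le_one_le) auto
    finally have cU: "real (card (U1 \<union> U2)) < card (nbhd V E x2)" .
    have "\<not> nbhd V E x2 \<subseteq> U1 \<union> U2"
    proof
      assume "nbhd V E x2 \<subseteq> U1 \<union> U2"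
      hence "card (nbhd V E x2) \<le> card (U1 \<union> U2)"
        using fN fTs unfolding U1_def U2_def by (intro card_mono) auto
      thus False using cU by linarith
    qed
    then obtain w where w: "w \<in> nbhd V E x2" "w \<notin> U1" "w \<notin> U2" by blast
    have wV: "w \<in> V" using w(1) unfolding nbhd_def by auto
    have "E y0 w" using w(1,2) unfolding U1_def by auto
    hence ewy: "E w y0" by (rule sym)
    have TsN: "Ts \<subseteq> nbhd V E w"
    proof
      fix u assume u: "u \<in> Ts"
      hence "E u w" using w(1,3) unfolding U2_def by auto
      thus "u \<in> nbhd V E w" unfolding nbhd_def using inV1[OF \<open>E u w\<close>] sym[OF \<open>E u w\<close>] by simp
    qed
    have TmN: "Tm \<subseteq> nbhd V E y0" using T(2) unfolding Y_def nbhd_def by auto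
    have "has_induced_biclaw V E t t"
      by (rule make_biclaw[OF g sd ewy TsN TmN T(3) T(4) t0 T(5)])
    thus False using nb by blast
  qed
qed

end
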